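(* Let $c$ be the ellipse $x^2/a_c^2+y^2/b_c^2=1$, $a_c>b_c>0$, and $e$ the confocal ellipse with semiaxes $a_e=\sqrt{a_c^2+k_e}$, $b_e=\sqrt{b_c^2+k_e}$, $k_e>0$. Put $\mathbf t_c(t)=(-a_c\sin t,\,b_c\cos t)$ and $k_h(t)=-\Vert\mathbf t_c(t)\Vert^2$. Let $P_1P_2\dots$ be a billiard in $e$ with caustic $c$, where $P_i=(a_e\cos t_i,\,b_e\sin t_i)$ and $Q_i=(a_c\cos t_i',\,b_c\sin t_i')$ is the point of contact of the side $P_iP_{i+1}$ with $c$. Then \[r_i:=\overline{Q_{i-1}P_i}=\frac{\Vert\mathbf t_c(t_{i-1}')\Vert\,\Vert\mathbf t_c(t_i)\Vert\sqrt{k_e}}{a_cb_c},\qquad l_i:=\overline{P_iQ_i}=\frac{\Vert\mathbf t_c(t_i)\Vert\,\Vert\mathbf t_c(t_i')\Vert\sqrt{k_e}}{a_cb_c}.\] Moreover, the canonical motion of the billiard induces for the side $P_iP_{i+1}$ the instant angular velocity \[\omega_i=\frac{a_cb_c}{\Vert\mathbf t_c(t_i')\Vert}=\frac{a_cb_c}{\sqrt{-k_h(t_i')}}.\]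
   Context: A billiard in $e$ with caustic $c$ is a sequence of points $P_1,P_2,\dots$ on $e$ such that each line $P_iP_{i+1}$ is tangent to $c$ and $P_{i-1}P_i$, $P_iP_{i+1}$ are the two tangents from $P_i$ to $c$; it is traversed counterclockwise. The canonical billiard motion is the motion of the billiard (all vertices staying on $e$ and all sides tangent to $c$) parametrized by a parameter $u$ such that every vertex $P=(a_e\cos t,b_e\sin t)$ moves with $\frac{dt}{du}=\Vert\mathbf t_c(t)\Vert=\sqrt{a_c^2\sin^2t+b_c^2\cos^2t}$, i.e. with velocity vector $\Vert\mathbf t_c(t)\Vert(-a_e\sin t,\,b_e\cos t)$; angular velocities are derivatives with respect to $u$. *)

theory Defs
  imports "HOL-Analysis.Analysis"
begin

definition ell :: "real \<Rightarrow> real \<Rightarrow> real \<Rightarrow> real \<times> real" where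
  "ell a b s = (a * cos s, b * sin s)"

definition tc :: "real \<Rightarrow> real \<Rightarrow> real \<Rightarrow> real \<times> real" where
  "tc ac bc s = (- ac * sin s, bc * cos s)"

definition kh :: "real \<Rightarrow> real \<Rightarrow> real \<Rightarrow> real" where
  "kh ac bc s = - (norm (tc ac bc s))\<^sup>2"

definition cross :: "real \<times> real \<Rightarrow> real \<times> real \<Rightarrow> real" where
  "cross v w = fst v * snd w - snd v * fst w"

definition ae :: "real \<Rightarrow> real \<Rightarrow> real" where "ae ac ke = sqrt (ac\<^sup>2 + ke)"
definition be :: "real \<Rightarrow> real \<Rightarrow> real" where "be bc ke = sqrt (bc\<^sup>2 + ke)"

definition vert :: "real \<Rightarrow> real \<Rightarrow> real \<Rightarrow> (nat \<Rightarrow> real) \<Rightarrow> nat \<Rightarrow> real \<times> real" where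
  "vert ac bc ke t i = ell (ae ac ke) (be bc ke) (t i)"

definition on_tangent :: "real \<Rightarrow> real \<Rightarrow> real \<Rightarrow> real \<times> real \<Rightarrow> bool" where
  "on_tangent ac bc s X \<longleftrightarrow> cross (X - ell ac bc s) (tc ac bc s) = 0"

text \<open>Billiard in e with caustic c (vertices P_0, P_1, ...): consecutive vertices distinct,
  each side is a tangent line of c, consecutive sides through a vertex are the two
  (distinct) tangents from it, traversed counterclockwise (c, hence the centre, lies to
  the left of each directed side).\<close>
definition is_billiard :: "real \<Rightarrow> real \<Rightarrow> real \<Rightarrow> (nat \<Rightarrow> real) \<Rightarrow> bool" where
  "is_billiard ac bc ke t \<longleftrightarrow>
     (\<forall>i. vert ac bc ke t i \<noteq> vert ac bc ke t (Suc i)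
        \<and> (\<exists>s. on_tangent ac bc s (vert ac bc ke t i) \<and> on_tangent ac bc s (vert ac bc ke t (Suc i)))
        \<and> cross (vert ac bc ke t i) (vert ac bc ke t (Suc i)) > 0
        \<and> \<not> collinear {vert ac bc ke t i, vert ac bc ke t (Suc i), vert ac bc ke t (Suc (Suc i))})"

definition contact_params :: "real \<Rightarrow> real \<Rightarrow> real \<Rightarrow> (nat \<Rightarrow> real) \<Rightarrow> (nat \<Rightarrow> real) \<Rightarrow> bool" where
  "contact_params ac bc ke t tp \<longleftrightarrow>
     (\<forall>i. on_tangent ac bc (tp i) (vert ac bc ke t i) \<and> on_tangent ac bc (tp i) (vert ac bc ke t (Suc i)))"

definition canonical_motion :: "real \<Rightarrow> real \<Rightarrow> real \<Rightarrow> real set \<Rightarrow> (real \<Rightarrow> nat \<Rightarrow> real) \<Rightarrow> (real \<Rightarrow> nat \<Rightarrow> real) \<Rightarrow> bool" where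
  "canonical_motion ac bc ke I T TP \<longleftrightarrow>
     (\<forall>u\<in>I. is_billiard ac bc ke (T u) \<and> contact_params ac bc ke (T u) (TP u))
     \<and> (\<forall>u\<in>I. \<forall>i. ((\<lambda>v. T v i) has_real_derivative norm (tc ac bc (T u i))) (at u))"

definition angle_lift :: "real set \<Rightarrow> (real \<Rightarrow> real \<times> real) \<Rightarrow> (real \<Rightarrow> real) \<Rightarrow> bool" where
  "angle_lift I d \<theta> \<longleftrightarrow> continuous_on I \<theta> \<and>
     (\<forall>u\<in>I. d u = (norm (d u) * cos (\<theta> u), norm (d u) * sin (\<theta> u)))"

definition has_angular_velocity :: "real set \<Rightarrow> (real \<Rightarrow> real \<times> real) \<Rightarrow> real \<Rightarrow> real \<Rightarrow> bool" where
  "has_angular_velocity I d w u0 \<longleftrightarrow>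
     (\<exists>\<theta>. angle_lift I d \<theta>) \<and>
     (\<forall>\<theta>. angle_lift I d \<theta> \<longrightarrow> (\<theta> has_real_derivative w) (at u0))"

end

theory Submission
  imports Defs
begin


lemma angle_deriv:
  fixes x y r \<theta> :: "real \<Rightarrow> real"
  assumes I: "open I" "u0 \<in> I" and ct: "continuous_on I \<theta>"
    and rep: "\<forall>u\<in>I. x u = r u * cos (\<theta> u) \<and> y u = r u * sin (\<theta> u) \<and> r u > 0"
    and dx: "(x has_real_derivative x') (at u0)" and dy: "(y has_real_derivative y') (at u0)"
  shows "(\<theta> has_real_derivative (x u0 * y' - y u0 * x') / ((x u0)\<^sup>2 + (y u0)\<^sup>2)) (at u0)"
proof -
  define \<theta>0 where "\<theta>0 = \<theta> u0"
  define c0 where "c0 = cos \<theta>0"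
  define s0 where "s0 = sin \<theta>0"
  define p where "p u = x u * c0 + y u * s0" for u
  define q where "q u = y u * c0 - x u * s0" for u
  define S where "S = \<theta> -` {\<theta>0 - pi/2 <..< \<theta>0 + pi/2} \<inter> I"
  have oS: "open S"
  proof -
    have "\<forall>B. open B \<longrightarrow> open (\<theta> -` B \<inter> I)" using ct unfolding continuous_on_open_vimage[OF I(1)] .
    then show ?thesis unfolding S_def by simp
  qed
  have u0S: "u0 \<in> S" unfolding S_def \<theta>0_def using I(2) by simp
  have pq: "p u = r u * cos (\<theta> u - \<theta>0) \<and> q u = r u * sin (\<theta> u - \<theta>0)" if "u \<in> I" for u
  proof -
    have xu: "x u = r u * cos (\<theta> u)" and yu: "y u = r u * sin (\<theta> u)" using rep that by auto
    show ?thesis unfolding p_def q_def c0_def s0_def xu yu cos_diff sin_diff by algebra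
  qed
  have eq: "\<theta>0 + arctan (q u / p u) = \<theta> u" if "u \<in> S" for u
  proof -
    have u: "u \<in> I" "\<theta> u - \<theta>0 \<in> {-(pi/2)<..<pi/2}" using that unfolding S_def by auto
    have "cos (\<theta> u - \<theta>0) > 0" using u(2) by (intro cos_gt_zero_pi) auto
    moreover have "r u > 0" using rep u(1) by auto
    ultimately have "q u / p u = tan (\<theta> u - \<theta>0)" using pq[OF u(1)] by (simp add: tan_def)
    then show ?thesis using arctan_tan[of "\<theta> u - \<theta>0"] u(2) by simp
  qed
  have r0: "r u0 > 0" "x u0 = r u0 * c0" "y u0 = r u0 * s0" using rep I(2) unfolding c0_def s0_def \<theta>0_def by auto
  have p0: "p u0 = r u0" and q0: "q u0 = 0" using pq[OF I(2)] unfolding \<theta>0_def by auto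
  have dp: "(p has_real_derivative x' * c0 + y' * s0) (at u0)"
    unfolding p_def[abs_def] by (rule DERIV_add[OF DERIV_cmult_right[OF dx] DERIV_cmult_right[OF dy]])
  have dq: "(q has_real_derivative y' * c0 - x' * s0) (at u0)"
    unfolding q_def[abs_def] by (rule DERIV_diff[OF DERIV_cmult_right[OF dy] DERIV_cmult_right[OF dx]])
  have "((\<lambda>u. q u / p u) has_real_derivative
        ((y' * c0 - x' * s0) * p u0 - q u0 * (x' * c0 + y' * s0)) / (p u0 * p u0)) (at u0)"
    using DERIV_divide[OF dq dp] p0 r0(1) by simp
  hence "((\<lambda>u. q u / p u) has_real_derivative (y' * c0 - x' * s0) / r u0) (at u0)"
    using p0 q0 r0(1) by simp
  hence "((\<lambda>u. arctan (q u / p u)) has_real_derivative inverse (1 + (q u0 / p u0)\<^sup>2) * ((y' * c0 - x' * s0) / r u0)) (at u0)"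
    by (rule DERIV_chain2[OF DERIV_arctan])
  hence darc: "((\<lambda>u. arctan (q u / p u)) has_real_derivative (y' * c0 - x' * s0) / r u0) (at u0)"
    using q0 by simp
  have "((\<lambda>u. \<theta>0 + arctan (q u / p u)) has_real_derivative (y' * c0 - x' * s0) / r u0) (at u0)"
    using DERIV_add[OF DERIV_const[of \<theta>0] darc] by simp
  then have d: "(\<theta> has_real_derivative (y' * c0 - x' * s0) / r u0) (at u0)"
    by (rule has_field_derivative_transform_within_open[OF _ oS u0S eq])
  have cs: "c0\<^sup>2 + s0\<^sup>2 = 1" unfolding c0_def s0_def by simp
  have den: "(x u0)\<^sup>2 + (y u0)\<^sup>2 = (r u0)\<^sup>2" unfolding r0(2,3) using cs by algebra
  have num: "x u0 * y' - y u0 * x' = r u0 * (y' * c0 - x' * s0)" unfolding r0(2,3) by algebra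
  have "(y' * c0 - x' * s0) / r u0 = (x u0 * y' - y u0 * x') / ((x u0)\<^sup>2 + (y u0)\<^sup>2)"
    unfolding den num using r0(1) by (simp add: power2_eq_square)
  then show ?thesis using d by simp
qed

lemma norm_tc2: "(norm (tc ac bc s))\<^sup>2 = ac\<^sup>2 * (sin s)\<^sup>2 + bc\<^sup>2 * (cos s)\<^sup>2"
  by (simp add: tc_def norm_Pair power_mult_distrib)

lemma norm_tc_pos: "ac > 0 \<Longrightarrow> bc > 0 \<Longrightarrow> norm (tc ac bc s) > 0"
proof -
  assume "ac > 0" "bc > 0"
  have "\<not> (sin s = 0 \<and> cos s = 0)" using sin_cos_squared_add[of s] by (auto simp del: sin_cos_squared_add)
  then show ?thesis using \<open>ac > 0\<close> \<open>bc > 0\<close> by (auto simp: tc_def zero_prod_def)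
qed

lemma ae2: "ke > 0 \<Longrightarrow> (ae ac ke)\<^sup>2 = ac\<^sup>2 + ke" by (simp add: ae_def add_pos_nonneg)
lemma be2: "ke > 0 \<Longrightarrow> (be bc ke)\<^sup>2 = bc\<^sup>2 + ke" by (simp add: be_def add_pos_nonneg)

lemma lam:
  assumes ac: "ac > 0" and bc: "bc > 0" and ke: "ke > 0"
    and tg: "on_tangent ac bc s (ell (ae ac ke) (be bc ke) t)"
  obtains l where "ae ac ke * cos t = ac * cos s - l * ac * sin s"
    "be bc ke * sin t = bc * sin s + l * bc * cos s"
    "(ac * bc * l)\<^sup>2 = ke * (norm (tc ac bc t))\<^sup>2"
proof -
  define X where "X = ae ac ke * cos t - ac * cos s"
  define Y where "Y = be bc ke * sin t - bc * sin s"
  define N where "N = ac\<^sup>2 * (sin s)\<^sup>2 + bc\<^sup>2 * (cos s)\<^sup>2"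
  have N: "N > 0" using norm_tc_pos[OF ac bc, of s] norm_tc2[of ac bc s] unfolding N_def
    by (metis zero_less_power)
  have cr: "X * (bc * cos s) + Y * (ac * sin s) = 0"
    using tg unfolding on_tangent_def cross_def ell_def tc_def X_def Y_def by (simp add: algebra_simps)
  define l where "l = (- X * ac * sin s + Y * bc * cos s) / N"
  have "X * N = - l * ac * sin s * N"
  proof -
    have "X * N = - ac * sin s * (- X * ac * sin s + Y * bc * cos s) + bc * cos s * (X * (bc * cos s) + Y * (ac * sin s))"
      unfolding N_def by (simp add: algebra_simps power2_eq_square)
    also have "\<dots> = - l * ac * sin s * N" using cr N unfolding l_def by simp
    finally show ?thesis .
  qed
  hence hx: "X = - l * ac * sin s" using N by (metis mult_cancel_right order_less_irrefl)
  have "Y * N = l * bc * cos s * N"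
  proof -
    have "Y * N = bc * cos s * (- X * ac * sin s + Y * bc * cos s) + ac * sin s * (X * (bc * cos s) + Y * (ac * sin s))"
      unfolding N_def by (simp add: algebra_simps power2_eq_square)
    also have "\<dots> = l * bc * cos s * N" using cr N unfolding l_def by simp
    finally show ?thesis .
  qed
  hence hy: "Y = l * bc * cos s" using N by (metis mult_cancel_right order_less_irrefl)
  have e1: "ae ac ke * cos t = ac * cos s - l * ac * sin s" using hx unfolding X_def by simp
  have e2: "be bc ke * sin t = bc * sin s + l * bc * cos s" using hy unfolding Y_def by simp
  have k: "(cos s - l * sin s)\<^sup>2 + (sin s + l * cos s)\<^sup>2 = 1 + l\<^sup>2"
    using sin_cos_squared_add[of s] by algebra
  have "(ae ac ke * cos t)\<^sup>2 * bc\<^sup>2 + (be bc ke * sin t)\<^sup>2 * ac\<^sup>2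
      = ac\<^sup>2 * bc\<^sup>2 * ((cos s - l * sin s)\<^sup>2 + (sin s + l * cos s)\<^sup>2)"
    unfolding e1 e2 by algebra
  also have "\<dots> = ac\<^sup>2 * bc\<^sup>2 * (1 + l\<^sup>2)" using k by simp
  finally have h1: "(ae ac ke * cos t)\<^sup>2 * bc\<^sup>2 + (be bc ke * sin t)\<^sup>2 * ac\<^sup>2 = ac\<^sup>2 * bc\<^sup>2 * (1 + l\<^sup>2)" .
  have "(ae ac ke * cos t)\<^sup>2 * bc\<^sup>2 + (be bc ke * sin t)\<^sup>2 * ac\<^sup>2
      = ac\<^sup>2 * bc\<^sup>2 * ((sin t)\<^sup>2 + (cos t)\<^sup>2) + ke * (ac\<^sup>2 * (sin t)\<^sup>2 + bc\<^sup>2 * (cos t)\<^sup>2)"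
    unfolding power_mult_distrib ae2[OF ke] be2[OF ke] by algebra
  also have "\<dots> = ac\<^sup>2 * bc\<^sup>2 + ke * (ac\<^sup>2 * (sin t)\<^sup>2 + bc\<^sup>2 * (cos t)\<^sup>2)" by simp
  finally have h2: "ac\<^sup>2 * bc\<^sup>2 * (1 + l\<^sup>2) = ac\<^sup>2 * bc\<^sup>2 + ke * (ac\<^sup>2 * (sin t)\<^sup>2 + bc\<^sup>2 * (cos t)\<^sup>2)"
    using h1 by simp
  have "(ac * bc * l)\<^sup>2 = ke * (ac\<^sup>2 * (sin t)\<^sup>2 + bc\<^sup>2 * (cos t)\<^sup>2)"
    using h2 by algebra
  then show ?thesis using that e1 e2 norm_tc2 by metis
qed

lemma dist_lemma:
  assumes ac: "ac > 0" and bc: "bc > 0" and ke: "ke > 0"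
    and tg: "on_tangent ac bc s (ell (ae ac ke) (be bc ke) t)"
  shows "dist (ell ac bc s) (ell (ae ac ke) (be bc ke) t)
       = norm (tc ac bc s) * norm (tc ac bc t) * sqrt ke / (ac * bc)"
proof -
  obtain l where e1: "ae ac ke * cos t = ac * cos s - l * ac * sin s"
    and e2: "be bc ke * sin t = bc * sin s + l * bc * cos s"
    and e3: "(ac * bc * l)\<^sup>2 = ke * (norm (tc ac bc t))\<^sup>2"
    using lam[OF ac bc ke tg] by blast
  have "ell (ae ac ke) (be bc ke) t - ell ac bc s = l *\<^sub>R tc ac bc s"
    using e1 e2 by (simp add: ell_def tc_def algebra_simps)
  hence "dist (ell ac bc s) (ell (ae ac ke) (be bc ke) t) = norm (l *\<^sub>R tc ac bc s)"
    by (metis dist_norm norm_minus_commute)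
  hence "dist (ell ac bc s) (ell (ae ac ke) (be bc ke) t) = \<bar>l\<bar> * norm (tc ac bc s)"
    by simp
  moreover have "\<bar>l\<bar> = norm (tc ac bc t) * sqrt ke / (ac * bc)"
  proof -
    have "ac * bc * \<bar>l\<bar> = sqrt ((ac * bc * l)\<^sup>2)" using ac bc by (simp add: abs_mult)
    also have "\<dots> = sqrt ke * norm (tc ac bc t)" unfolding e3 by (simp add: real_sqrt_mult)
    finally show ?thesis using ac bc by (simp add: field_simps)
  qed
  ultimately show ?thesis by simp
qed



lemma alg:
  fixes ac bc ke A B S C l1 l2 n1 n2 c1 c2 s1 s2 :: real
  assumes ac: "ac > 0" and bc: "bc > 0" and ke: "ke > 0" and Ap: "A > 0" and Bp: "B > 0"
    and A2: "A\<^sup>2 = ac\<^sup>2 + ke" and B2: "B\<^sup>2 = bc\<^sup>2 + ke" and SC: "S\<^sup>2 + C\<^sup>2 = 1"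
    and c1: "A * c1 = ac * (C - l1 * S)" and s1: "B * s1 = bc * (S + l1 * C)"
    and c2: "A * c2 = ac * (C - l2 * S)" and s2: "B * s2 = bc * (S + l2 * C)"
    and p1: "c1\<^sup>2 + s1\<^sup>2 = 1" and p2: "c2\<^sup>2 + s2\<^sup>2 = 1"
    and n1: "(ac * bc * l1)\<^sup>2 = ke * n1\<^sup>2" "n1 \<ge> 0"
    and n2: "(ac * bc * l2)\<^sup>2 = ke * n2\<^sup>2" "n2 \<ge> 0"
    and ccw: "(A * c1) * (B * s2) - (B * s1) * (A * c2) > 0"
  shows "((A * c2 - A * c1) * (B * (n2 * c2 - n1 * c1)) - (B * s2 - B * s1) * (- A * (n2 * s2 - n1 * s1)))
         / ((A * c2 - A * c1)\<^sup>2 + (B * s2 - B * s1)\<^sup>2) = ac * bc / sqrt (ac\<^sup>2 * S\<^sup>2 + bc\<^sup>2 * C\<^sup>2)"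
proof -
  define N where "N = ac\<^sup>2 * S\<^sup>2 + bc\<^sup>2 * C\<^sup>2"
  define Q2 where "Q2 = ac\<^sup>2 * B\<^sup>2 * S\<^sup>2 + bc\<^sup>2 * A\<^sup>2 * C\<^sup>2"
  define Q1 where "Q1 = S * C * (bc\<^sup>2 * A\<^sup>2 - ac\<^sup>2 * B\<^sup>2)"
  define Q0 where "Q0 = ac\<^sup>2 * B\<^sup>2 * C\<^sup>2 + bc\<^sup>2 * A\<^sup>2 * S\<^sup>2 - A\<^sup>2 * B\<^sup>2"
  have Npos: "N > 0"
  proof -
    have "\<not> (S = 0 \<and> C = 0)" using SC by auto
    hence "S\<^sup>2 > 0 \<or> C\<^sup>2 > 0" by auto
    thus ?thesis unfolding N_def using ac bc
      by (auto intro: add_pos_nonneg add_nonneg_pos)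
  qed
  have Q2pos: "Q2 > 0"
  proof -
    have "\<not> (S = 0 \<and> C = 0)" using SC by auto
    hence "S\<^sup>2 > 0 \<or> C\<^sup>2 > 0" by auto
    thus ?thesis unfolding Q2_def using ac bc Ap Bp
      by (auto intro: add_pos_nonneg add_nonneg_pos)
  qed
  have Q0neg: "Q0 < 0"
  proof -
    have "Q0 = - ke * (B\<^sup>2 * C\<^sup>2 + A\<^sup>2 * S\<^sup>2)" unfolding Q0_def using A2 B2 SC by algebra
    moreover have "B\<^sup>2 * C\<^sup>2 + A\<^sup>2 * S\<^sup>2 > 0"
    proof -
      have "\<not> (S = 0 \<and> C = 0)" using SC by auto
      hence "S\<^sup>2 > 0 \<or> C\<^sup>2 > 0" by auto
      thus ?thesis using Ap Bp by (auto intro: add_pos_nonneg add_nonneg_pos)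
    qed
    ultimately show ?thesis using ke by (simp add: mult_pos_pos)
  qed
  have E1: "Q2 * l1\<^sup>2 + 2 * Q1 * l1 + Q0 = 0"
  proof -
    have "(A * c1)\<^sup>2 * B\<^sup>2 + (B * s1)\<^sup>2 * A\<^sup>2 = A\<^sup>2 * B\<^sup>2" using p1 by algebra
    then show ?thesis unfolding c1 s1 Q2_def Q1_def Q0_def by algebra
  qed
  have E2: "Q2 * l2\<^sup>2 + 2 * Q1 * l2 + Q0 = 0"
  proof -
    have "(A * c2)\<^sup>2 * B\<^sup>2 + (B * s2)\<^sup>2 * A\<^sup>2 = A\<^sup>2 * B\<^sup>2" using p2 by algebra
    then show ?thesis unfolding c2 s2 Q2_def Q1_def Q0_def by algebra
  qed
  have cr: "(A * c1) * (B * s2) - (B * s1) * (A * c2) = ac * bc * (l2 - l1)"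
    unfolding c1 c2 s1 s2 using SC by algebra
  have l12: "l1 < l2" using ccw ac bc mult_pos_pos[OF ac bc] unfolding cr by (auto simp: zero_less_mult_iff)
  have "(l1 - l2) * (Q2 * (l1 + l2) + 2 * Q1) = 0" using E1 E2 by algebra
  hence V1: "Q2 * (l1 + l2) = - 2 * Q1" using l12 by simp
  have V2: "Q2 * (l1 * l2) = Q0"
  proof -
    have "Q2 * (Q2 * l1\<^sup>2 + 2 * Q1 * l1 + Q0) = 0" using E1 by simp
    hence "Q2 * (Q0 - Q2 * (l1 * l2)) = 0" using V1 by algebra
    thus ?thesis using Q2pos by simp
  qed
  have "l1 * l2 < 0"
  proof -
    have "Q2 * (l1 * l2) < 0" using V2 Q0neg by simp
    thus ?thesis using Q2pos by (simp add: mult_less_0_iff)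
  qed
  hence l1n: "l1 < 0" and l2p: "l2 > 0" using l12 by (auto simp: mult_less_0_iff)
  define K where "K = ac * bc / sqrt ke"
  have Kp: "K > 0" unfolding K_def using ac bc ke by simp
  have nn: "n1 = - K * l1" "n2 = K * l2"
  proof -
    have "sqrt ke * n1 = sqrt ((ac * bc * l1)\<^sup>2)" using n1 ke by (simp add: real_sqrt_mult)
    also have "\<dots> = - ac * bc * l1" using ac bc l1n by (simp add: abs_mult)
    finally show "n1 = - K * l1" unfolding K_def using ke by (simp add: field_simps)
    have "sqrt ke * n2 = sqrt ((ac * bc * l2)\<^sup>2)" using n2 ke by (simp add: real_sqrt_mult)
    also have "\<dots> = ac * bc * l2" using ac bc l2p by (simp add: abs_mult)
    finally show "n2 = K * l2" unfolding K_def using ke by (simp add: field_simps)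
  qed
  define D where "D = (A * c2 - A * c1) * (B * (n2 * c2 - n1 * c1)) - (B * s2 - B * s1) * (- A * (n2 * s2 - n1 * s1))"
  have key1: "A * B * D = (l2 - l1) * K * (Q1 * (l1 + l2) + Q2 * (l1\<^sup>2 + l2\<^sup>2))"
  proof -
    have "A * B * D = (A * c2 - A * c1) * B * (n2 * B * (A * c2) - n1 * B * (A * c1))
        + (B * s2 - B * s1) * A * (n2 * A * (B * s2) - n1 * A * (B * s1))"
      unfolding D_def by algebra
    also have "\<dots> = (l2 - l1) * K * (Q1 * (l1 + l2) + Q2 * (l1\<^sup>2 + l2\<^sup>2))"
      unfolding c1 c2 s1 s2 nn Q1_def Q2_def by algebra
    finally show ?thesis .
  qed
  have key2: "Q1 * (l1 + l2) + Q2 * (l1\<^sup>2 + l2\<^sup>2) = Q2 * (l2 - l1)\<^sup>2 / 2"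
  proof -
    have "Q2 * (Q1 * (l1 + l2) + Q2 * (l1\<^sup>2 + l2\<^sup>2)) = Q2 * (Q2 * (l2 - l1)\<^sup>2 / 2)"
      using V1 V2 by algebra
    thus ?thesis using Q2pos by simp
  qed
  have key3: "Q2 * (l2 - l1) = 2 * A * B * sqrt ke * sqrt N"
  proof -
    have "(Q2 * (l2 - l1))\<^sup>2 = 4 * (Q1\<^sup>2 - Q0 * Q2)" using V1 V2 by algebra
    also have "Q1\<^sup>2 - Q0 * Q2 = A\<^sup>2 * B\<^sup>2 * ke * N"
      unfolding Q0_def Q1_def Q2_def N_def using A2 B2 SC by algebra
    finally have "(Q2 * (l2 - l1))\<^sup>2 = (2 * A * B * sqrt ke * sqrt N)\<^sup>2"
      using ke Npos by (simp add: power_mult_distrib)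
    moreover have "Q2 * (l2 - l1) \<ge> 0" using Q2pos l12 by simp
    moreover have "2 * A * B * sqrt ke * sqrt N \<ge> 0" using Ap Bp ke Npos by simp
    ultimately show ?thesis using power2_eq_imp_eq by blast
  qed
  have "A * B * D = A * B * ((l2 - l1)\<^sup>2 * ac * bc * sqrt N)"
  proof -
    have "A * B * D = (l2 - l1)\<^sup>2 * K * (Q2 * (l2 - l1)) / 2"
      unfolding key1 key2 by (simp add: power2_eq_square)
    also have "\<dots> = (l2 - l1)\<^sup>2 * K * sqrt ke * (A * B * sqrt N)" unfolding key3 by simp
    also have "\<dots> = A * B * ((l2 - l1)\<^sup>2 * ac * bc * sqrt N)" unfolding K_def using ke by simp
    finally show ?thesis .
  qed
  hence Dv: "D = (l2 - l1)\<^sup>2 * ac * bc * sqrt N" using Ap Bp by simp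
  have den: "(A * c2 - A * c1)\<^sup>2 + (B * s2 - B * s1)\<^sup>2 = (l2 - l1)\<^sup>2 * N"
    unfolding N_def c1 c2 s1 s2 by algebra
  have "D / ((A * c2 - A * c1)\<^sup>2 + (B * s2 - B * s1)\<^sup>2) = ac * bc / sqrt N"
    unfolding Dv den using l12 Npos
    by (simp add: field_simps)
  thus ?thesis unfolding D_def N_def .
qed


lemma lift_exists:
  fixes d :: "real \<Rightarrow> real \<times> real"
  assumes cx: "continuous_on I (\<lambda>u. fst (d u))" and cy: "continuous_on I (\<lambda>u. snd (d u))"
    and cI: "convex I" and nz: "\<forall>u\<in>I. d u \<noteq> 0"
  shows "\<exists>\<theta>. angle_lift I d \<theta>"
proof -
  define f where "f u = Complex (fst (d u)) (snd (d u))" for u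
  have cf: "continuous_on I f" unfolding f_def by (rule continuous_on_Complex[OF cx cy])
  have fnz: "f u \<noteq> 0" if "u \<in> I" for u
    using nz that unfolding f_def by (auto simp: complex_eq_iff prod_eq_iff)
  obtain g where cg: "continuous_on I g" and fg: "\<And>u. u \<in> I \<Longrightarrow> f u = exp (g u)"
    using continuous_logarithm_on_contractible[OF cf convex_imp_contractible[OF cI] fnz] by blast
  have "angle_lift I d (\<lambda>u. Im (g u))"
    unfolding angle_lift_def
  proof (intro conjI ballI)
    show "continuous_on I (\<lambda>u. Im (g u))" using cg by (intro continuous_intros)
  next
    fix u assume u: "u \<in> I"
    have fe: "f u = exp (g u)" using fg[OF u] .
    have n: "norm (d u) = exp (Re (g u))"
    proof -
      have "norm (d u) = sqrt ((fst (d u))\<^sup>2 + (snd (d u))\<^sup>2)" unfolding norm_prod_def by simp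
      also have "\<dots> = cmod (f u)" unfolding f_def complex_norm ..
      also have "\<dots> = exp (Re (g u))" unfolding fe by (rule norm_exp_eq_Re)
      finally show ?thesis .
    qed
    have "fst (d u) = Re (f u)" unfolding f_def by simp
    also have "\<dots> = exp (Re (g u)) * cos (Im (g u))" unfolding fe by (rule Re_exp)
    finally have h1: "fst (d u) = norm (d u) * cos (Im (g u))" unfolding n .
    have "snd (d u) = Im (f u)" unfolding f_def by simp
    also have "\<dots> = exp (Re (g u)) * sin (Im (g u))" unfolding fe by (rule Im_exp)
    finally have h2: "snd (d u) = norm (d u) * sin (Im (g u))" unfolding n .
    show "d u = (norm (d u) * cos (Im (g u)), norm (d u) * sin (Im (g u)))"
      using h1 h2 by (metis prod.collapse)
  qed
  then show ?thesis by blast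
qed

theorem lemma1:
  fixes ac bc ke :: real and t tp :: "nat \<Rightarrow> real"
    and T TP :: "real \<Rightarrow> nat \<Rightarrow> real" and \<alpha> \<beta> :: real
  assumes "ac > bc" and "bc > 0" and "ke > 0"
    and "is_billiard ac bc ke t" and "contact_params ac bc ke t tp"
    and "canonical_motion ac bc ke {\<alpha><..<\<beta>} T TP"
  shows "(\<forall>i\<ge>1.
            dist (ell ac bc (tp (i - 1))) (vert ac bc ke t i)
              = norm (tc ac bc (tp (i - 1))) * norm (tc ac bc (t i)) * sqrt ke / (ac * bc)
          \<and> dist (vert ac bc ke t i) (ell ac bc (tp i))
              = norm (tc ac bc (t i)) * norm (tc ac bc (tp i)) * sqrt ke / (ac * bc))
       \<and> (\<forall>u0\<in>{\<alpha><..<\<beta>}. \<forall>i.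
            has_angular_velocity {\<alpha><..<\<beta>}
              (\<lambda>u. vert ac bc ke (T u) (Suc i) - vert ac bc ke (T u) i)
              (ac * bc / norm (tc ac bc (TP u0 i))) u0
          \<and> ac * bc / norm (tc ac bc (TP u0 i)) = ac * bc / sqrt (- kh ac bc (TP u0 i)))"
proof -
  have bc: "bc > 0" and ac: "ac > 0" and ke: "ke > 0" using assms by auto
  have P1: "\<forall>i\<ge>1.
            dist (ell ac bc (tp (i - 1))) (vert ac bc ke t i)
              = norm (tc ac bc (tp (i - 1))) * norm (tc ac bc (t i)) * sqrt ke / (ac * bc)
          \<and> dist (vert ac bc ke t i) (ell ac bc (tp i))
              = norm (tc ac bc (t i)) * norm (tc ac bc (tp i)) * sqrt ke / (ac * bc)"
  proof (intro allI impI conjI)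
    fix i :: nat assume i: "i \<ge> 1"
    have "on_tangent ac bc (tp (i - 1)) (vert ac bc ke t (Suc (i - 1)))"
      using assms(5) unfolding contact_params_def by blast
    hence "on_tangent ac bc (tp (i - 1)) (ell (ae ac ke) (be bc ke) (t i))"
      using i unfolding vert_def by simp
    from dist_lemma[OF ac bc ke this]
    show "dist (ell ac bc (tp (i - 1))) (vert ac bc ke t i)
              = norm (tc ac bc (tp (i - 1))) * norm (tc ac bc (t i)) * sqrt ke / (ac * bc)"
      unfolding vert_def .
    have "on_tangent ac bc (tp i) (ell (ae ac ke) (be bc ke) (t i))"
      using assms(5) unfolding contact_params_def vert_def by blast
    from dist_lemma[OF ac bc ke this]
    show "dist (vert ac bc ke t i) (ell ac bc (tp i))
              = norm (tc ac bc (t i)) * norm (tc ac bc (tp i)) * sqrt ke / (ac * bc)"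
      unfolding vert_def by (simp add: dist_commute mult.commute)
  qed
  define I where "I = {\<alpha><..<\<beta>}"
  have cm: "\<forall>u\<in>I. is_billiard ac bc ke (T u) \<and> contact_params ac bc ke (T u) (TP u)"
    "\<forall>u\<in>I. \<forall>i. ((\<lambda>v. T v i) has_real_derivative norm (tc ac bc (T u i))) (at u)"
    using assms(6) unfolding canonical_motion_def I_def by auto
  have cT: "continuous_on I (\<lambda>u. T u j)" for j
    using cm(2) by (intro continuous_at_imp_continuous_on) (auto intro: DERIV_isCont)
  have P2: "has_angular_velocity I
              (\<lambda>u. vert ac bc ke (T u) (Suc i) - vert ac bc ke (T u) i)
              (ac * bc / norm (tc ac bc (TP u0 i))) u0"
    if u0: "u0 \<in> I" for u0 i
  proof -
    define d where "d u = vert ac bc ke (T u) (Suc i) - vert ac bc ke (T u) i" for u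
    define A where "A = ae ac ke"
    define B where "B = be bc ke"
    define x where "x u = A * cos (T u (Suc i)) - A * cos (T u i)" for u
    define y where "y u = B * sin (T u (Suc i)) - B * sin (T u i)" for u
    have dxy: "d u = (x u, y u)" for u unfolding d_def x_def y_def vert_def ell_def A_def B_def by simp
    have nz: "\<forall>u\<in>I. d u \<noteq> 0"
    proof
      fix u assume "u \<in> I"
      then have "vert ac bc ke (T u) i \<noteq> vert ac bc ke (T u) (Suc i)"
        using cm(1) unfolding is_billiard_def by blast
      then show "d u \<noteq> 0" unfolding d_def by simp
    qed
    have ex: "\<exists>\<theta>. angle_lift I d \<theta>"
    proof (rule lift_exists)
      show "continuous_on I (\<lambda>u. fst (d u))" unfolding dxy x_def using cT by (auto intro!: continuous_intros)
      show "continuous_on I (\<lambda>u. snd (d u))" unfolding dxy y_def using cT by (auto intro!: continuous_intros)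
      show "convex I" unfolding I_def by simp
    qed (rule nz)
    define t1 where "t1 = T u0 i"
    define t2 where "t2 = T u0 (Suc i)"
    define s where "s = TP u0 i"
    define n1 where "n1 = norm (tc ac bc t1)"
    define n2 where "n2 = norm (tc ac bc t2)"
    have dx: "(x has_real_derivative - A * (n2 * sin t2 - n1 * sin t1)) (at u0)"
    proof -
      have "(x has_real_derivative A * (- sin t2 * n2) - A * (- sin t1 * n1)) (at u0)"
        unfolding x_def t1_def t2_def n1_def n2_def using cm(2) u0
        by (auto intro!: derivative_eq_intros)
      thus ?thesis by (simp add: algebra_simps)
    qed
    have dy: "(y has_real_derivative B * (n2 * cos t2 - n1 * cos t1)) (at u0)"
    proof -
      have "(y has_real_derivative B * (cos t2 * n2) - B * (cos t1 * n1)) (at u0)"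
        unfolding y_def t1_def t2_def n1_def n2_def using cm(2) u0
        by (auto intro!: derivative_eq_intros)
      thus ?thesis by (simp add: algebra_simps)
    qed
    have omega: "(x u0 * (B * (n2 * cos t2 - n1 * cos t1)) - y u0 * (- A * (n2 * sin t2 - n1 * sin t1)))
         / ((x u0)\<^sup>2 + (y u0)\<^sup>2) = ac * bc / norm (tc ac bc s)"
    proof -
      have bil: "is_billiard ac bc ke (T u0)" and cp: "contact_params ac bc ke (T u0) (TP u0)"
        using cm(1) u0 by auto
      have "on_tangent ac bc (TP u0 i) (vert ac bc ke (T u0) i) \<and> on_tangent ac bc (TP u0 i) (vert ac bc ke (T u0) (Suc i))"
        using cp unfolding contact_params_def by blast
      hence tg1: "on_tangent ac bc s (ell A B t1)" and tg2: "on_tangent ac bc s (ell A B t2)"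
        unfolding vert_def s_def t1_def t2_def A_def B_def by simp_all
      obtain l1 where c1: "A * cos t1 = ac * cos s - l1 * ac * sin s"
        and s1: "B * sin t1 = bc * sin s + l1 * bc * cos s"
        and n1e: "(ac * bc * l1)\<^sup>2 = ke * n1\<^sup>2"
        using lam[OF ac bc ke tg1[unfolded A_def B_def]] unfolding A_def B_def n1_def by blast
      obtain l2 where c2: "A * cos t2 = ac * cos s - l2 * ac * sin s"
        and s2: "B * sin t2 = bc * sin s + l2 * bc * cos s"
        and n2e: "(ac * bc * l2)\<^sup>2 = ke * n2\<^sup>2"
        using lam[OF ac bc ke tg2[unfolded A_def B_def]] unfolding A_def B_def n2_def by blast
      have "cross (vert ac bc ke (T u0) i) (vert ac bc ke (T u0) (Suc i)) > 0"
        using bil unfolding is_billiard_def by blast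
      moreover have "cross (vert ac bc ke (T u0) i) (vert ac bc ke (T u0) (Suc i))
          = (A * cos t1) * (B * sin t2) - (B * sin t1) * (A * cos t2)"
        by (simp add: cross_def vert_def ell_def t1_def t2_def A_def B_def)
      ultimately have ccw: "(A * cos t1) * (B * sin t2) - (B * sin t1) * (A * cos t2) > 0" by simp
      have Ap: "A > 0" unfolding A_def ae_def using ke by (simp add: add_nonneg_pos)
      have Bp: "B > 0" unfolding B_def be_def using ke by (simp add: add_nonneg_pos)
      have F: "((A * cos t2 - A * cos t1) * (B * (n2 * cos t2 - n1 * cos t1)) - (B * sin t2 - B * sin t1) * (- A * (n2 * sin t2 - n1 * sin t1)))
         / ((A * cos t2 - A * cos t1)\<^sup>2 + (B * sin t2 - B * sin t1)\<^sup>2) = ac * bc / sqrt (ac\<^sup>2 * (sin s)\<^sup>2 + bc\<^sup>2 * (cos s)\<^sup>2)"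
      proof (rule alg[OF ac bc ke Ap Bp])
        show "A\<^sup>2 = ac\<^sup>2 + ke" unfolding A_def using ae2[OF ke] .
        show "B\<^sup>2 = bc\<^sup>2 + ke" unfolding B_def using be2[OF ke] .
        show "(sin s)\<^sup>2 + (cos s)\<^sup>2 = 1" by simp
        show "A * cos t1 = ac * (cos s - l1 * sin s)" using c1 by (simp add: algebra_simps)
        show "B * sin t1 = bc * (sin s + l1 * cos s)" using s1 by (simp add: algebra_simps)
        show "A * cos t2 = ac * (cos s - l2 * sin s)" using c2 by (simp add: algebra_simps)
        show "B * sin t2 = bc * (sin s + l2 * cos s)" using s2 by (simp add: algebra_simps)
        show "(ac * bc * l1)\<^sup>2 = ke * n1\<^sup>2" by (rule n1e)
        show "(ac * bc * l2)\<^sup>2 = ke * n2\<^sup>2" by (rule n2e)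
        show "n1 \<ge> 0" unfolding n1_def by (rule norm_ge_zero)
        show "n2 \<ge> 0" unfolding n2_def by (rule norm_ge_zero)
        show "(A * cos t1) * (B * sin t2) - (B * sin t1) * (A * cos t2) > 0" by (rule ccw)
        show "(cos t1)\<^sup>2 + (sin t1)\<^sup>2 = 1" by simp
        show "(cos t2)\<^sup>2 + (sin t2)\<^sup>2 = 1" by simp
      qed
      have sq: "sqrt (ac\<^sup>2 * (sin s)\<^sup>2 + bc\<^sup>2 * (cos s)\<^sup>2) = norm (tc ac bc s)"
        unfolding norm_tc2[symmetric] by simp
      have xu: "x u0 = A * cos t2 - A * cos t1" unfolding x_def t1_def t2_def ..
      have yu: "y u0 = B * sin t2 - B * sin t1" unfolding y_def t1_def t2_def ..
      show ?thesis unfolding xu yu sq[symmetric] by (rule F)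
    qed
    have H: "angle_lift I d \<theta> \<Longrightarrow> (\<theta> has_real_derivative ac * bc / norm (tc ac bc s)) (at u0)" for \<theta>
    proof -
      assume al: "angle_lift I d \<theta>"
      have "(\<theta> has_real_derivative (x u0 * (B * (n2 * cos t2 - n1 * cos t1)) - y u0 * (- A * (n2 * sin t2 - n1 * sin t1)))
         / ((x u0)\<^sup>2 + (y u0)\<^sup>2)) (at u0)"
      proof (rule angle_deriv[OF _ u0 _ _ dx dy])
        show "open I" unfolding I_def by simp
        show "continuous_on I \<theta>" using al unfolding angle_lift_def by blast
        show "\<forall>u\<in>I. x u = norm (d u) * cos (\<theta> u) \<and> y u = norm (d u) * sin (\<theta> u) \<and> norm (d u) > 0"
        proof
          fix u assume u: "u \<in> I"
          have e: "d u = (norm (d u) * cos (\<theta> u), norm (d u) * sin (\<theta> u))"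
            using al u unfolding angle_lift_def by blast
          have "fst (d u) = norm (d u) * cos (\<theta> u)" using arg_cong[OF e, of fst] by (simp only: fst_conv)
          moreover have "snd (d u) = norm (d u) * sin (\<theta> u)" using arg_cong[OF e, of snd] by (simp only: snd_conv)
          moreover have "x u = fst (d u)" "y u = snd (d u)" by (simp_all add: dxy)
          moreover have "norm (d u) > 0" using nz u by simp
          ultimately show "x u = norm (d u) * cos (\<theta> u) \<and> y u = norm (d u) * sin (\<theta> u) \<and> norm (d u) > 0"
            by simp
        qed
      qed
      then show ?thesis unfolding omega .
    qed
    have hav: "has_angular_velocity I d (ac * bc / norm (tc ac bc s)) u0"
      unfolding has_angular_velocity_def using ex H by blast
    have dd: "(\<lambda>u. vert ac bc ke (T u) (Suc i) - vert ac bc ke (T u) i) = d"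
      by (rule ext) (simp add: d_def)
    show ?thesis unfolding dd s_def[symmetric] by (rule hav)
  qed
  have P3: "ac * bc / norm (tc ac bc s) = ac * bc / sqrt (- kh ac bc s)" for s
    unfolding kh_def by simp
  have P4: "\<forall>u0\<in>{\<alpha><..<\<beta>}. \<forall>i.
            has_angular_velocity {\<alpha><..<\<beta>}
              (\<lambda>u. vert ac bc ke (T u) (Suc i) - vert ac bc ke (T u) i)
              (ac * bc / norm (tc ac bc (TP u0 i))) u0
          \<and> ac * bc / norm (tc ac bc (TP u0 i)) = ac * bc / sqrt (- kh ac bc (TP u0 i))"
  proof (intro ballI allI conjI)
    fix u0 i assume "u0 \<in> {\<alpha><..<\<beta>}"
    then have "u0 \<in> I" unfolding I_def .
    from P2[OF this, of i] show "has_angular_velocity {\<alpha><..<\<beta>}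
              (\<lambda>u. vert ac bc ke (T u) (Suc i) - vert ac bc ke (T u) i)
              (ac * bc / norm (tc ac bc (TP u0 i))) u0" unfolding I_def .
    show "ac * bc / norm (tc ac bc (TP u0 i)) = ac * bc / sqrt (- kh ac bc (TP u0 i))" by (rule P3)
  qed
  show ?thesis using P1 P4 by (rule conjI)
qed

end
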